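(* Let $1\le\ell\le n$, let $u,e\in\mathbb{R}^{\binom{n}{\ell}}$ and $v=u+e$. Then \[\|\mathbf{V}(v)-\mathbf{V}(u)\|_F^2 \le 3\ell^2\|e\|^2\big(2\|u\|^2+\|e\|^2\big).\] In particular, if $v_0\in\mathbb{R}^{\binom{n}{\ell}}$ is a unit vector and $v_0 = v^{(m)} + v^\perp$ with $v^{(m)}$ orthogonal to $v^\perp$, then $\|\mathbf{V}(v_0)-\mathbf{V}(v^{(m)})\|_F^2\le 9\ell^2\|v^\perp\|^2$.
   Context: Vectors in $\mathbb{R}^{\binom{n}{\ell}}$ are indexed by subsets $S\subseteq[n]$ with $|S|=\ell$. For such a vector $v$, the voting matrix $\mathbf{V}(v)$ is the symmetric $n\times n$ matrix with $\mathbf{V}_{ii}(v)=0$ and, for $i\ne j$, $\mathbf{V}_{ij}(v)=\frac12\sum_{|S|=|T|=\ell} v_Sv_T\mathbf{1}_{S\triangle T=\{i,j\}}$. $\|\cdot\|_F$ is the Frobenius norm. *)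

theory Defs
  imports "HOL-Analysis.Analysis"
begin

text \<open>Index set of R^(n choose l): the l-element subsets of [n] = {1..n}.
  A vector is a function nat set => real; only its values on lsubsets n l matter.\<close>
definition lsubsets :: "nat \<Rightarrow> nat \<Rightarrow> nat set set" where
  "lsubsets n l = {S. S \<subseteq> {1..n} \<and> card S = l}"

definition voting :: "nat \<Rightarrow> nat \<Rightarrow> (nat set \<Rightarrow> real) \<Rightarrow> nat \<Rightarrow> nat \<Rightarrow> real" where
  "voting n l v i j = (if i = j then 0 else
     (1/2) * (\<Sum>S\<in>lsubsets n l. \<Sum>T\<in>lsubsets n l.
        v S * v T * (if (S - T) \<union> (T - S) = {i, j} then 1 else 0)))"

definition vnorm2 :: "nat \<Rightarrow> nat \<Rightarrow> (nat set \<Rightarrow> real) \<Rightarrow> real" where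
  "vnorm2 n l v = (\<Sum>S\<in>lsubsets n l. (v S)^2)"

definition vinner :: "nat \<Rightarrow> nat \<Rightarrow> (nat set \<Rightarrow> real) \<Rightarrow> (nat set \<Rightarrow> real) \<Rightarrow> real" where
  "vinner n l u w = (\<Sum>S\<in>lsubsets n l. u S * w S)"

definition frob2 :: "nat \<Rightarrow> (nat \<Rightarrow> nat \<Rightarrow> real) \<Rightarrow> real" where
  "frob2 n M = (\<Sum>i\<in>{1..n}. \<Sum>j\<in>{1..n}. (M i j)^2)"

end

theory Submission imports Defs begin

definition cind :: "nat \<Rightarrow> nat \<Rightarrow> nat set \<Rightarrow> nat set \<Rightarrow> real" where
  "cind i j S T = (if S - T = {i} \<and> T - S = {j} then 1 else 0)"

lemma fin_L: "finite (lsubsets n l)"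
proof -
  have "lsubsets n l \<subseteq> Pow {1..n}" unfolding lsubsets_def by auto
  thus ?thesis by (rule finite_subset) simp
qed

lemma cind_sq: "cind i j S T * cind i j S T = cind i j S T"
  by (simp add: cind_def)

lemma cind_le1: "cind i j S T \<le> (if i \<in> S then (if T = insert j (S - {i}) then 1 else 0) else 0)"
  unfolding cind_def by auto

lemma cind_le2: "cind i j S T \<le> (if j \<in> T then (if S = insert i (T - {j}) then 1 else 0) else 0)"
  unfolding cind_def by auto

lemma ind_split:
  assumes S: "S \<in> lsubsets n l" and T: "T \<in> lsubsets n l" and ij: "i \<noteq> j"
  shows "(if (S - T) \<union> (T - S) = {i, j} then 1 else 0) = cind i j S T + cind j i S T"
proof -
  have fS: "finite S" and fT: "finite T" and c: "card S = card T"
    using S T unfolding lsubsets_def by (auto intro: finite_subset)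
  have cd: "card (S - T) = card (T - S)"
    using fS fT c by (metis card_Diff_subset_Int finite_Int Int_commute)
  have fd1: "finite (S - T)" "finite (T - S)" using fS fT by auto
  show ?thesis
  proof (cases "(S - T) \<union> (T - S) = {i, j}")
    case True
    have disj: "(S - T) \<inter> (T - S) = {}" by auto
    have s1: "S - T \<subseteq> {i, j}" and s2: "T - S \<subseteq> {i, j}" using True by blast+
    have u: "i \<in> S - T \<or> i \<in> T - S" and u2: "j \<in> S - T \<or> j \<in> T - S" using True by blast+
    have ne: "S - T \<noteq> {} \<longleftrightarrow> T - S \<noteq> {}" using cd fd1 by (metis card.empty card_0_eq)
    have "(S - T = {i} \<and> T - S = {j}) \<or> (S - T = {j} \<and> T - S = {i})"
    proof (cases "i \<in> S - T")
      case True
      hence a: "i \<notin> T - S" by blast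
      have "T - S \<noteq> {}" using ne True by blast
      hence b: "T - S = {j}" using s2 a by blast
      hence "j \<notin> S - T" by blast
      hence "S - T = {i}" using s1 True by blast
      thus ?thesis using b by blast
    next
      case False
      hence iT: "i \<in> T - S" using u by blast
      have "S - T \<noteq> {}" using ne iT by blast
      hence b: "S - T = {j}" using s1 False by blast
      hence "j \<notin> T - S" by blast
      hence "T - S = {i}" using s2 iT by blast
      thus ?thesis using b by blast
    qed
    then show ?thesis
    proof
      assume h: "S - T = {i} \<and> T - S = {j}"
      hence "cind i j S T = 1" by (simp add: cind_def)
      moreover have "cind j i S T = 0" using h ij by (simp add: cind_def)
      ultimately show ?thesis using True by simp
    next
      assume h: "S - T = {j} \<and> T - S = {i}"
      hence "cind j i S T = 1" by (simp add: cind_def)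
      moreover have "cind i j S T = 0" using h ij by (simp add: cind_def)
      ultimately show ?thesis using True by (simp add: insert_commute)
    qed
  next
    case False
    have n1: "\<not> (S - T = {i} \<and> T - S = {j})"
    proof
      assume h: "S - T = {i} \<and> T - S = {j}"
      hence "(S - T) \<union> (T - S) = {i, j}" by auto
      with False show False by simp
    qed
    have n2: "\<not> (S - T = {j} \<and> T - S = {i})"
    proof
      assume h: "S - T = {j} \<and> T - S = {i}"
      hence "(S - T) \<union> (T - S) = {i, j}" by auto
      with False show False by simp
    qed
    have c1: "cind i j S T = 0" unfolding cind_def by (rule if_not_P[OF n1])
    have c2: "cind j i S T = 0" unfolding cind_def by (rule if_not_P[OF n2])
    have c3: "(if (S - T) \<union> (T - S) = {i, j} then 1 else 0) = (0::real)" by (rule if_not_P[OF False])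
    show ?thesis unfolding c1 c2 c3 by simp
  qed
qed

definition amat :: "nat \<Rightarrow> nat \<Rightarrow> (nat set \<Rightarrow> real) \<Rightarrow> (nat set \<Rightarrow> real) \<Rightarrow> nat \<Rightarrow> nat \<Rightarrow> real" where
  "amat n l x y i j = (\<Sum>S\<in>lsubsets n l. \<Sum>T\<in>lsubsets n l. x S * y T * cind i j S T)"

lemma sum_cind1: "(\<Sum>T\<in>lsubsets n l. cind i j S T) \<le> (if i \<in> S then 1 else 0)"
proof -
  have "(\<Sum>T\<in>lsubsets n l. cind i j S T) \<le> (\<Sum>T\<in>lsubsets n l. (if i \<in> S then (if T = insert j (S - {i}) then 1 else 0) else 0))"
    by (rule sum_mono) (rule cind_le1)
  also have "\<dots> \<le> (if i \<in> S then 1 else 0)"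
    using fin_L[of n l] by (simp add: sum.delta)
  finally show ?thesis .
qed

lemma sum_cind2: "(\<Sum>S\<in>lsubsets n l. cind i j S T) \<le> (if j \<in> T then 1 else 0)"
proof -
  have "(\<Sum>S\<in>lsubsets n l. cind i j S T) \<le> (\<Sum>S\<in>lsubsets n l. (if j \<in> T then (if S = insert i (T - {j}) then 1 else 0) else 0))"
    by (rule sum_mono) (rule cind_le2)
  also have "\<dots> \<le> (if j \<in> T then 1 else 0)"
    using fin_L[of n l] by (simp add: sum.delta)
  finally show ?thesis .
qed

lemma cind_pow: "(cind i j S T)^2 = cind i j S T"
  by (simp add: cind_def)

lemma amat_sq:
  "(amat n l x y i j)^2 \<le> (\<Sum>S\<in>lsubsets n l. (x S)^2 * (if i \<in> S then 1 else 0))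
     * (\<Sum>T\<in>lsubsets n l. (y T)^2 * (if j \<in> T then 1 else 0))"
proof -
  let ?L = "lsubsets n l"
  let ?f = "\<lambda>p. x (fst p) * cind i j (fst p) (snd p)"
  let ?g = "\<lambda>p. y (snd p) * cind i j (fst p) (snd p)"
  have e1: "amat n l x y i j = (\<Sum>p\<in>?L \<times> ?L. ?f p * ?g p)"
  proof -
    have e: "\<And>S T. x S * y T * cind i j S T = (x S * cind i j S T) * (y T * cind i j S T)"
      by (simp add: cind_def)
    show ?thesis unfolding amat_def sum.cartesian_product e by (simp add: case_prod_beta)
  qed
  have cs: "(\<Sum>p\<in>?L \<times> ?L. ?f p * ?g p)^2 \<le> (\<Sum>p\<in>?L \<times> ?L. (?f p)^2) * (\<Sum>p\<in>?L \<times> ?L. (?g p)^2)"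
    by (rule Cauchy_Schwarz_ineq_sum)
  have X: "(\<Sum>p\<in>?L \<times> ?L. (?f p)^2) = (\<Sum>S\<in>?L. (x S)^2 * (\<Sum>T\<in>?L. cind i j S T))"
    unfolding sum_distrib_left sum.cartesian_product
    by (simp add: case_prod_beta power_mult_distrib cind_pow)
  have Y: "(\<Sum>p\<in>?L \<times> ?L. (?g p)^2) = (\<Sum>T\<in>?L. (y T)^2 * (\<Sum>S\<in>?L. cind i j S T))"
  proof -
    have "(\<Sum>p\<in>?L \<times> ?L. (?g p)^2) = (\<Sum>S\<in>?L. \<Sum>T\<in>?L. (y T)^2 * cind i j S T)"
      unfolding sum.cartesian_product
      by (simp add: case_prod_beta power_mult_distrib cind_pow)
    also have "\<dots> = (\<Sum>T\<in>?L. \<Sum>S\<in>?L. (y T)^2 * cind i j S T)"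
      by (rule sum.swap)
    finally show ?thesis by (simp add: sum_distrib_left)
  qed
  have X2: "(\<Sum>S\<in>?L. (x S)^2 * (\<Sum>T\<in>?L. cind i j S T)) \<le> (\<Sum>S\<in>?L. (x S)^2 * (if i \<in> S then 1 else 0))"
    by (rule sum_mono, rule mult_left_mono, rule sum_cind1, simp)
  have Y2: "(\<Sum>T\<in>?L. (y T)^2 * (\<Sum>S\<in>?L. cind i j S T)) \<le> (\<Sum>T\<in>?L. (y T)^2 * (if j \<in> T then 1 else 0))"
    by (rule sum_mono, rule mult_left_mono, rule sum_cind2, simp)
  have n1: "0 \<le> (\<Sum>S\<in>?L. (x S)^2 * (if i \<in> S then 1 else 0::real))"
    by (rule sum_nonneg) simp
  have n2: "0 \<le> (\<Sum>T\<in>?L. (y T)^2 * (\<Sum>S\<in>?L. cind i j S T))"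
    by (rule sum_nonneg, rule mult_nonneg_nonneg, simp, rule sum_nonneg) (simp add: cind_def)
  have "(\<Sum>p\<in>?L \<times> ?L. (?f p)^2) * (\<Sum>p\<in>?L \<times> ?L. (?g p)^2)
       \<le> (\<Sum>S\<in>?L. (x S)^2 * (if i \<in> S then 1 else 0)) * (\<Sum>T\<in>?L. (y T)^2 * (if j \<in> T then 1 else 0))"
    unfolding X Y by (rule mult_mono[OF X2 Y2 n1 n2])
  with cs e1 show ?thesis by simp
qed

lemma alpha_sum:
  "(\<Sum>i\<in>{1..n}. \<Sum>S\<in>lsubsets n l. (x S)^2 * (if i \<in> S then 1 else 0)) = real l * vnorm2 n l x"
proof -
  have "(\<Sum>i\<in>{1..n}. \<Sum>S\<in>lsubsets n l. (x S)^2 * (if i \<in> S then 1 else 0))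
      = (\<Sum>S\<in>lsubsets n l. (x S)^2 * (\<Sum>i\<in>{1..n}. (if i \<in> S then 1 else 0)))"
    by (subst sum.swap) (simp add: sum_distrib_left)
  also have "\<dots> = (\<Sum>S\<in>lsubsets n l. (x S)^2 * real l)"
  proof (rule sum.cong)
    fix S assume S: "S \<in> lsubsets n l"
    have "(\<Sum>i\<in>{1..n}. (if i \<in> S then 1 else 0::real)) = real (card ({1..n} \<inter> S))"
      by (simp add: sum.If_cases)
    also have "{1..n} \<inter> S = S" using S unfolding lsubsets_def by auto
    also have "card S = l" using S unfolding lsubsets_def by auto
    finally show "(x S)^2 * (\<Sum>i\<in>{1..n}. (if i \<in> S then 1 else 0)) = (x S)^2 * real l" by simp
  qed simp
  also have "\<dots> = real l * vnorm2 n l x" unfolding vnorm2_def by (simp add: sum_distrib_left mult.commute)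
  finally show ?thesis .
qed

lemma vnorm2_nonneg: "0 \<le> vnorm2 n l x"
  unfolding vnorm2_def by (auto intro: sum_nonneg)

lemma amat_frob:
  "(\<Sum>i\<in>{1..n}. \<Sum>j\<in>{1..n}. (amat n l x y i j)^2) \<le> (real l)^2 * vnorm2 n l x * vnorm2 n l y"
proof -
  let ?a = "\<lambda>i. \<Sum>S\<in>lsubsets n l. (x S)^2 * (if i \<in> S then 1 else 0)"
  let ?b = "\<lambda>j. \<Sum>T\<in>lsubsets n l. (y T)^2 * (if j \<in> T then 1 else 0)"
  have "(\<Sum>i\<in>{1..n}. \<Sum>j\<in>{1..n}. (amat n l x y i j)^2) \<le> (\<Sum>i\<in>{1..n}. \<Sum>j\<in>{1..n}. ?a i * ?b j)"
    by (intro sum_mono amat_sq)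
  also have "\<dots> = (\<Sum>i\<in>{1..n}. ?a i) * (\<Sum>j\<in>{1..n}. ?b j)"
    by (simp add: sum_product)
  also have "\<dots> = (real l * vnorm2 n l x) * (real l * vnorm2 n l y)"
    using alpha_sum[where x=x and n=n and l=l] alpha_sum[where x=y and n=n and l=l] by simp
  also have "\<dots> = (real l)^2 * vnorm2 n l x * vnorm2 n l y" by (simp add: power2_eq_square)
  finally show ?thesis .
qed

definition bil :: "nat \<Rightarrow> nat \<Rightarrow> (nat set \<Rightarrow> real) \<Rightarrow> (nat set \<Rightarrow> real) \<Rightarrow> nat \<Rightarrow> nat \<Rightarrow> real" where
  "bil n l x y i j = (if i = j then 0 else
     (1/2) * (\<Sum>S\<in>lsubsets n l. \<Sum>T\<in>lsubsets n l.
        x S * y T * (if (S - T) \<union> (T - S) = {i, j} then 1 else 0)))"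

lemma bil_eq:
  assumes ij: "i \<noteq> j"
  shows "bil n l x y i j = (amat n l x y i j + amat n l x y j i) / 2"
proof -
  let ?L = "lsubsets n l"
  have "(\<Sum>S\<in>?L. \<Sum>T\<in>?L. x S * y T * (if (S - T) \<union> (T - S) = {i, j} then 1 else 0))
      = (\<Sum>S\<in>?L. \<Sum>T\<in>?L. x S * y T * cind i j S T + x S * y T * cind j i S T)"
  proof (rule sum.cong[OF refl], rule sum.cong[OF refl])
    fix S T assume S: "S \<in> ?L" and T: "T \<in> ?L"
    show "x S * y T * (if (S - T) \<union> (T - S) = {i, j} then 1 else 0) = x S * y T * cind i j S T + x S * y T * cind j i S T"
      unfolding ind_split[OF S T ij] by (simp add: distrib_left)
  qed
  also have "\<dots> = amat n l x y i j + amat n l x y j i"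
    unfolding amat_def by (simp only: sum.distrib)
  finally show ?thesis unfolding bil_def using ij by simp
qed

lemma bil_frob: "frob2 n (bil n l x y) \<le> (real l)^2 * vnorm2 n l x * vnorm2 n l y"
proof -
  have "frob2 n (bil n l x y) \<le> (\<Sum>i\<in>{1..n}. \<Sum>j\<in>{1..n}. ((amat n l x y i j)^2 + (amat n l x y j i)^2) / 2)"
    unfolding frob2_def
  proof (intro sum_mono)
    fix i j
    show "(bil n l x y i j)^2 \<le> ((amat n l x y i j)^2 + (amat n l x y j i)^2) / 2"
    proof (cases "i = j")
      case True thus ?thesis by (simp add: bil_def)
    next
      case False
      have "0 \<le> (amat n l x y i j - amat n l x y j i)^2" by simp
      thus ?thesis using False by (simp add: bil_eq power2_eq_square field_simps)
    qed
  qed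
  also have "\<dots> = ((\<Sum>i\<in>{1..n}. \<Sum>j\<in>{1..n}. (amat n l x y i j)^2) + (\<Sum>i\<in>{1..n}. \<Sum>j\<in>{1..n}. (amat n l x y j i)^2)) / 2"
    by (simp only: add_divide_distrib sum.distrib sum_divide_distrib)
  finally have h1: "frob2 n (bil n l x y) \<le> ((\<Sum>i\<in>{1..n}. \<Sum>j\<in>{1..n}. (amat n l x y i j)^2) + (\<Sum>i\<in>{1..n}. \<Sum>j\<in>{1..n}. (amat n l x y j i)^2)) / 2" .
  have h3: "(\<Sum>i\<in>{1..n}. \<Sum>j\<in>{1..n}. (amat n l x y j i)^2) = (\<Sum>i\<in>{1..n}. \<Sum>j\<in>{1..n}. (amat n l x y i j)^2)"
    by (rule sum.swap)
  have h4: "(\<Sum>i\<in>{1..n}. \<Sum>j\<in>{1..n}. (amat n l x y i j)^2) \<le> (real l)^2 * vnorm2 n l x * vnorm2 n l y"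
    by (rule amat_frob)
  show ?thesis using order_trans[OF h1[unfolded h3 add_divide_distrib field_sum_of_halves] h4] .
qed

lemma quad_split:
  "(\<Sum>S\<in>A. \<Sum>T\<in>A. (u S + e S) * (u T + e T) * c S T)
   = (\<Sum>S\<in>A. \<Sum>T\<in>A. u S * u T * c S T) + (\<Sum>S\<in>A. \<Sum>T\<in>A. u S * e T * c S T)
     + (\<Sum>S\<in>A. \<Sum>T\<in>A. e S * u T * c S T) + (\<Sum>S\<in>A. \<Sum>T\<in>A. e S * e T * (c S T::real))"
proof -
  have "\<And>S T. (u S + e S) * (u T + e T) * c S T = u S * u T * c S T + u S * e T * c S T + e S * u T * c S T + e S * e T * c S T"
    by (simp add: algebra_simps)
  then show ?thesis by (simp only: sum.distrib)
qed

lemma voting_split: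
  "voting n l (\<lambda>S. u S + e S) i j - voting n l u i j = bil n l u e i j + bil n l e u i j + bil n l e e i j"
proof (cases "i = j")
  case True thus ?thesis by (simp add: voting_def bil_def)
next
  case False
  show ?thesis unfolding voting_def bil_def quad_split using False by (simp add: algebra_simps)
qed

lemma sq3: "((a::real) + b + c)^2 \<le> 3 * (a^2 + b^2 + c^2)"
proof -
  have "0 \<le> (a - b)^2 + (b - c)^2 + (a - c)^2" by simp
  thus ?thesis by (simp add: power2_eq_square algebra_simps)
qed

lemma part1:
  "frob2 n (\<lambda>i j. voting n l (\<lambda>S. u S + e S) i j - voting n l u i j)
     \<le> 3 * (real l)^2 * vnorm2 n l e * (2 * vnorm2 n l u + vnorm2 n l e)"
proof -
  let ?p = "bil n l u e" and ?q = "bil n l e u" and ?r = "bil n l e e"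
  have "frob2 n (\<lambda>i j. voting n l (\<lambda>S. u S + e S) i j - voting n l u i j)
      = (\<Sum>i\<in>{1..n}. \<Sum>j\<in>{1..n}. (?p i j + ?q i j + ?r i j)^2)"
    unfolding frob2_def voting_split ..
  also have "\<dots> \<le> (\<Sum>i\<in>{1..n}. \<Sum>j\<in>{1..n}. 3 * ((?p i j)^2 + (?q i j)^2 + (?r i j)^2))"
    by (intro sum_mono sq3)
  also have "\<dots> = 3 * (frob2 n ?p + frob2 n ?q + frob2 n ?r)"
    unfolding frob2_def by (simp add: sum.distrib sum_distrib_left)
  also have "\<dots> \<le> 3 * ((real l)^2 * vnorm2 n l u * vnorm2 n l e + (real l)^2 * vnorm2 n l e * vnorm2 n l u
       + (real l)^2 * vnorm2 n l e * vnorm2 n l e)"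
    by (intro mult_left_mono add_mono bil_frob) simp
  also have "\<dots> = 3 * (real l)^2 * vnorm2 n l e * (2 * vnorm2 n l u + vnorm2 n l e)"
    by (simp add: algebra_simps)
  finally show ?thesis .
qed

theorem lemma5:
  fixes n l :: nat
  assumes "1 \<le> l" and "l \<le> n"
  shows "(\<forall>u e :: nat set \<Rightarrow> real.
           frob2 n (\<lambda>i j. voting n l (\<lambda>S. u S + e S) i j - voting n l u i j)
             \<le> 3 * (real l)^2 * vnorm2 n l e * (2 * vnorm2 n l u + vnorm2 n l e))
       \<and> (\<forall>v0 vm vp :: nat set \<Rightarrow> real.
           vnorm2 n l v0 = 1 \<longrightarrow>
           (\<forall>S\<in>lsubsets n l. v0 S = vm S + vp S) \<longrightarrow>
           vinner n l vm vp = 0 \<longrightarrow>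
           frob2 n (\<lambda>i j. voting n l v0 i j - voting n l vm i j)
             \<le> 9 * (real l)^2 * vnorm2 n l vp)"
proof (intro conjI allI impI)
  fix u e :: "nat set \<Rightarrow> real"
  show "frob2 n (\<lambda>i j. voting n l (\<lambda>S. u S + e S) i j - voting n l u i j)
             \<le> 3 * (real l)^2 * vnorm2 n l e * (2 * vnorm2 n l u + vnorm2 n l e)"
    by (rule part1)
next
  fix v0 vm vp :: "nat set \<Rightarrow> real"
  assume h1: "vnorm2 n l v0 = 1" and h2: "\<forall>S\<in>lsubsets n l. v0 S = vm S + vp S"
    and h3: "vinner n l vm vp = 0"
  have vv: "voting n l v0 = voting n l (\<lambda>S. vm S + vp S)"
    unfolding voting_def using h2 by (intro ext) (simp cong: sum.cong)
  have "vnorm2 n l v0 = (\<Sum>S\<in>lsubsets n l. (vm S)^2 + 2 * (vm S * vp S) + (vp S)^2)"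
    unfolding vnorm2_def using h2 by (intro sum.cong refl) (simp add: power2_eq_square algebra_simps)
  also have "\<dots> = vnorm2 n l vm + 2 * vinner n l vm vp + vnorm2 n l vp"
    unfolding vnorm2_def vinner_def by (simp add: sum.distrib sum_distrib_left)
  finally have nrm: "vnorm2 n l vm + vnorm2 n l vp = 1" using h1 h3 by simp
  have a: "2 * vnorm2 n l vm + vnorm2 n l vp \<le> 3"
    using nrm vnorm2_nonneg[of n l vm] vnorm2_nonneg[of n l vp] by linarith
  have b: "0 \<le> 3 * (real l)^2 * vnorm2 n l vp" using vnorm2_nonneg[of n l vp] by simp
  have "frob2 n (\<lambda>i j. voting n l v0 i j - voting n l vm i j)
       \<le> 3 * (real l)^2 * vnorm2 n l vp * (2 * vnorm2 n l vm + vnorm2 n l vp)"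
    unfolding vv by (rule part1)
  also have "\<dots> \<le> 3 * (real l)^2 * vnorm2 n l vp * 3"
    by (rule mult_left_mono[OF a b])
  finally show "frob2 n (\<lambda>i j. voting n l v0 i j - voting n l vm i j) \<le> 9 * (real l)^2 * vnorm2 n l vp"
    by simp
qed

end
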